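(* Let $A\in\mathbb R^{d\times d}$ and $V\in\mathbb R^{k\times d}$ be nonzero matrices and $n\in\mathbb N$, and let $f$ be self-attention with parameters $(A,V)$. Let $\mathcal E_A\subset\overline B(0,1)^n$ be the set of sequences $(x_1,\dots,x_n)$ such that for every $i\in\{1,\dots,n\}$ the maximum $\max_{1\le j\le n}x_i^\top A^\top x_j$ is attained at a unique index $j$. Then the complement of $\mathcal E_A$ in $\overline B(0,1)^n$ has zero Lebesgue measure, and for every $X\in\mathcal E_A$ there exists a function $\theta:[0,+\infty)\to[0,+\infty)$ such that $\theta(R)\to1$ exponentially fast as $R\to+\infty$ and, for all $R\ge0$, $$\|D_{RX}f\|_2\le\theta(R)\,\|V\|_2\sqrt n.$$
   Context: For $X=(x_1,\dots,x_n)\in(\mathbb R^d)^n$, $f(X)=\big(V\sum_{j=1}^nP_{ij}x_j\big)_{1\le i\le n}$ with $P_{ij}=\exp(x_i^\top A^\top x_j)/\sum_{l=1}^n\exp(x_i^\top A^\top x_l)$. $\overline B(0,1)$ is the closed unit ball of $\mathbb R^d$. $D_Xf$ is the differential of $f$ at $X$ and $\|D_Xf\|_2$ its operator norm with respect to the Frobenius norms $\|X\|_F=(\sum_i|x_i|^2)^{1/2}$ on $(\mathbb R^d)^n$ and $(\mathbb R^k)^n$; $RX=(Rx_1,\dots,Rx_n)$. $\|V\|_2$ is the spectral norm. *)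

theory Defs
  imports "HOL-Analysis.Analysis"
begin

text \<open>A sequence X = (x_1,...,x_n) in (R^d)^n is an element of real^'d^'n, with x_i = X$i.
  The norm on real^'d^'n is exactly the Frobenius norm sqrt(sum_i |x_i|^2).\<close>

definition attn_score :: "real^'d^'d \<Rightarrow> real^'d^'n \<Rightarrow> 'n \<Rightarrow> 'n \<Rightarrow> real" where
  "attn_score A X i j = (A *v (X$i)) \<bullet> (X$j)"   (* = x_i^T A^T x_j *)

definition attn_P :: "real^'d^'d \<Rightarrow> real^'d^'n \<Rightarrow> 'n::finite \<Rightarrow> 'n \<Rightarrow> real" where
  "attn_P A X i j = exp (attn_score A X i j) / (\<Sum>l\<in>UNIV. exp (attn_score A X i l))"

definition self_attention :: "real^'d^'d \<Rightarrow> real^'d^'k \<Rightarrow> real^'d^'n::finite \<Rightarrow> real^'k^'n" where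
  "self_attention A V X = (\<chi> i. V *v (\<Sum>j\<in>UNIV. attn_P A X i j *\<^sub>R (X$j)))"

definition unit_ball_seq :: "(real^'d^'n) set" where
  "unit_ball_seq = {X. \<forall>i. X$i \<in> cball 0 1}"

definition E_set :: "real^'d^'d \<Rightarrow> (real^'d^'n) set" where
  "E_set A = {X \<in> unit_ball_seq. \<forall>i. \<exists>!j. \<forall>l. attn_score A X i l \<le> attn_score A X i j}"

end

theory Submission imports Defs "HOL-Library.Landau_Symbols" "HOL-Real_Asymp.Real_Asymp" begin


lemma bounded_linear_axis: "bounded_linear (axis i :: 'a::real_normed_vector \<Rightarrow> 'a^'n::finite)"
proof (rule bounded_linear_intro[where K=1])
  show "axis i (x + y) = axis i x + axis i y" for x y :: 'a
    by (simp add: axis_def vec_eq_iff)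
  show "axis i (r *\<^sub>R x) = r *\<^sub>R axis i x" for r and x :: 'a
    by (simp add: axis_def vec_eq_iff)
  show "norm (axis i x) \<le> norm x * 1" for x :: 'a
  proof -
    have "norm (axis i x) = L2_set (\<lambda>j. norm (axis i x $ j)) UNIV" by (simp add: norm_vec_def)
    also have "\<dots> = L2_set (\<lambda>j. if j = i then norm x else 0) UNIV"
      by (rule L2_set_cong) (auto simp: axis_def)
    also have "\<dots> = norm x" by (simp add: L2_set_def if_distrib[of "\<lambda>t. t^2"] cong: if_cong)
    finally show ?thesis by simp
  qed
qed

lemma vec_lambda_sum_axis: "(\<chi> i. g i) = (\<Sum>i\<in>UNIV. axis i (g i))"
  by (simp add: vec_eq_iff axis_def sum_component)

lemma has_derivative_vec_lambda:
  fixes g :: "'n::finite \<Rightarrow> 'a::real_normed_vector \<Rightarrow> 'b::real_normed_vector"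
  assumes "\<And>i. (g i has_derivative g' i) (at x)"
  shows "((\<lambda>x. \<chi> i. g i x) has_derivative (\<lambda>h. \<chi> i. g' i h)) (at x)"
proof -
  have "((\<lambda>x. \<Sum>i\<in>UNIV. axis i (g i x)) has_derivative (\<lambda>h. \<Sum>i\<in>UNIV. axis i (g' i h))) (at x)"
    by (intro has_derivative_sum bounded_linear.has_derivative[OF bounded_linear_axis] assms)
  then show ?thesis by (simp add: vec_lambda_sum_axis[symmetric])
qed




definition dscore :: "real^'d^'d \<Rightarrow> real^'d^'n \<Rightarrow> real^'d^'n \<Rightarrow> 'n \<Rightarrow> 'n \<Rightarrow> real" where
  "dscore A Y H i j = (A *v (H$i)) \<bullet> (Y$j) + (A *v (Y$i)) \<bullet> (H$j)"

definition dP :: "real^'d^'d \<Rightarrow> real^'d^'n::finite \<Rightarrow> real^'d^'n \<Rightarrow> 'n \<Rightarrow> 'n \<Rightarrow> real" where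
  "dP A Y H i j = attn_P A Y i j * (dscore A Y H i j - (\<Sum>l\<in>UNIV. attn_P A Y i l * dscore A Y H i l))"

lemma has_derivative_score:
  fixes A :: "real^'d^'d" and Y :: "real^'d^'n::finite"
  shows   "((\<lambda>Y. attn_score A Y i j) has_derivative (\<lambda>H. dscore A Y H i j)) (at Y)"
proof -
  have l1: "bounded_linear (\<lambda>Y::real^'d^'n. A *v (Y$i))"
    using bounded_linear_compose[OF matrix_vector_mul_bounded_linear bounded_linear_vec_nth] by blast
  have l2: "bounded_linear (\<lambda>Y::real^'d^'n. Y$j)" by (rule bounded_linear_vec_nth)
  show ?thesis unfolding attn_score_def dscore_def
    by (rule has_derivative_eq_rhs, rule has_derivative_inner[OF bounded_linear.has_derivative[OF l1 has_derivative_ident]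
          bounded_linear.has_derivative[OF l2 has_derivative_ident]]) (auto simp: inner_commute add.commute)
qed

lemma sumexp_pos: "(\<Sum>l\<in>UNIV. exp (attn_score A Y i (l::'n::finite))) > 0"
  by (rule sum_pos) auto

lemma has_derivative_P:
  fixes A :: "real^'d^'d" and Y :: "real^'d^'n::finite"
  shows   "((\<lambda>Y. attn_P A Y i j) has_derivative (\<lambda>H. dP A Y H i j)) (at Y)"
proof -
  let ?S = "\<lambda>Y. \<Sum>l\<in>UNIV. exp (attn_score A Y i l)"
  have e: "((\<lambda>Y. exp (attn_score A Y i l)) has_derivative (\<lambda>H. exp (attn_score A Y i l) * dscore A Y H i l)) (at Y)" for l
    by (rule has_derivative_eq_rhs, rule has_derivative_exp[OF has_derivative_score]) (auto simp: mult.commute)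
  have s: "(?S has_derivative (\<lambda>H. \<Sum>l\<in>UNIV. exp (attn_score A Y i l) * dscore A Y H i l)) (at Y)"
    by (rule has_derivative_sum, rule e)
  show ?thesis unfolding attn_P_def[abs_def]
    apply (rule has_derivative_eq_rhs, rule has_derivative_divide'[OF e s])
    using sumexp_pos[of A Y i]
    apply (auto simp: dP_def attn_P_def fun_eq_iff field_simps sum_divide_distrib[symmetric] sum_distrib_left)
    done
qed




definition dSA :: "real^'d^'d \<Rightarrow> real^'d^'k \<Rightarrow> real^'d^'n::finite \<Rightarrow> real^'d^'n \<Rightarrow> real^'k^'n" where
  "dSA A V Y H = (\<chi> i. V *v (\<Sum>j\<in>UNIV. dP A Y H i j *\<^sub>R (Y$j) + attn_P A Y i j *\<^sub>R (H$j)))"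

lemma has_derivative_SA:
  fixes A :: "real^'d^'d" and V :: "real^'d^'k" and Y :: "real^'d^'n::finite"
  shows "(self_attention A V has_derivative dSA A V Y) (at Y)"
proof -
  have "((\<lambda>Y. \<chi> i. V *v (\<Sum>j\<in>UNIV. attn_P A Y i j *\<^sub>R (Y$j))) has_derivative
     (\<lambda>H. \<chi> i. V *v (\<Sum>j\<in>UNIV. dP A Y H i j *\<^sub>R (Y$j) + attn_P A Y i j *\<^sub>R (H$j)))) (at Y)"
    apply (rule has_derivative_vec_lambda)
    apply (rule bounded_linear.has_derivative[OF matrix_vector_mul_bounded_linear])
    apply (rule has_derivative_sum)
    apply (rule has_derivative_eq_rhs)
     apply (rule has_derivative_scaleR[OF has_derivative_P bounded_linear.has_derivative[OF bounded_linear_vec_nth has_derivative_ident]])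
    apply (simp add: fun_eq_iff add.commute)
    done
  then show ?thesis unfolding self_attention_def[abs_def] dSA_def[abs_def] .
qed

lemma frechet_SA:
  fixes A :: "real^'d^'d" and V :: "real^'d^'k" and Y :: "real^'d^'n::finite"
  shows "frechet_derivative (self_attention A V) (at Y) = dSA A V Y"
  by (rule frechet_derivative_at[OF has_derivative_SA, symmetric])




lemma nth_le: "norm (x$i) \<le> norm x"
  by (rule Finite_Cartesian_Product.norm_nth_le)

lemma P_nonneg: "attn_P A Y i j \<ge> 0"
  unfolding attn_P_def by (intro divide_nonneg_nonneg sum_nonneg) auto

lemma P_sum: "(\<Sum>j\<in>UNIV. attn_P A Y i j) = (1::real)"
  unfolding attn_P_def using sumexp_pos[of A Y i]
  by (simp add: sum_divide_distrib[symmetric])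

lemma P_le1: "attn_P A Y i j \<le> 1"
proof -
  have "attn_P A Y i j \<le> (\<Sum>j\<in>UNIV. attn_P A Y i j)"
    by (rule member_le_sum) (auto simp: P_nonneg)
  then show ?thesis by (simp add: P_sum)
qed

lemma dscore_bound:
  fixes A :: "real^'d^'d" and Y :: "real^'d^'n::finite"
  shows "\<bar>dscore A Y H i j\<bar> \<le> 2 * onorm ((*v) A) * norm Y * norm H"
proof -
  let ?a = "onorm ((*v) A)"
  have a0: "?a \<ge> 0" by (rule onorm_pos_le) simp
  have 1: "\<bar>(A *v (H$i)) \<bullet> (Y$j)\<bar> \<le> ?a * norm H * norm Y"
  proof -
    have "\<bar>(A *v (H$i)) \<bullet> (Y$j)\<bar> \<le> norm (A *v (H$i)) * norm (Y$j)" by (rule Cauchy_Schwarz_ineq2)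
    also have "\<dots> \<le> (?a * norm (H$i)) * norm (Y$j)"
      by (intro mult_right_mono onorm) auto
    also have "\<dots> \<le> (?a * norm H) * norm Y"
      by (intro mult_mono mult_left_mono nth_le a0 mult_nonneg_nonneg norm_ge_zero) auto
    finally show ?thesis .
  qed
  have 2: "\<bar>(A *v (Y$i)) \<bullet> (H$j)\<bar> \<le> ?a * norm Y * norm H"
  proof -
    have "\<bar>(A *v (Y$i)) \<bullet> (H$j)\<bar> \<le> norm (A *v (Y$i)) * norm (H$j)" by (rule Cauchy_Schwarz_ineq2)
    also have "\<dots> \<le> (?a * norm (Y$i)) * norm (H$j)"
      by (intro mult_right_mono onorm) auto
    also have "\<dots> \<le> (?a * norm Y) * norm H"
      by (intro mult_mono mult_left_mono nth_le a0 mult_nonneg_nonneg norm_ge_zero) auto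
    finally show ?thesis .
  qed
  show ?thesis unfolding dscore_def using 1 2 by (simp add: algebra_simps) 
qed

lemma dP_bound:
  fixes A :: "real^'d^'d" and Y :: "real^'d^'n::finite"
  shows "\<bar>dP A Y H i j\<bar> \<le> attn_P A Y i j * (1 - attn_P A Y i j) * (4 * onorm ((*v) A) * norm Y * norm H)"
proof -
  define D where "D = 2 * onorm ((*v) A) * norm Y * norm H"
  let ?P = "attn_P A Y i" and ?d = "\<lambda>l. dscore A Y H i l"
  have dD: "\<bar>?d l\<bar> \<le> D" for l unfolding D_def by (rule dscore_bound)
  have "?d j - (\<Sum>l\<in>UNIV. ?P l * ?d l) = (\<Sum>l\<in>UNIV. ?P l * (?d j - ?d l))"
    using P_sum[of A Y i] by (simp add: algebra_simps sum_subtractf sum_distrib_right[symmetric])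
  also have "\<bar>\<dots>\<bar> \<le> (\<Sum>l\<in>UNIV. ?P l * (if l = j then 0 else 2 * D))"
  proof -
    have "\<bar>\<Sum>l\<in>UNIV. ?P l * (?d j - ?d l)\<bar> \<le> (\<Sum>l\<in>UNIV. \<bar>?P l * (?d j - ?d l)\<bar>)" by (rule sum_abs)
    also have "\<dots> \<le> (\<Sum>l\<in>UNIV. ?P l * (if l = j then 0 else 2 * D))"
    proof (rule sum_mono)
      fix l
      have "\<bar>?d j - ?d l\<bar> \<le> 2 * D" using dD[of j] dD[of l] by linarith
      then show "\<bar>?P l * (?d j - ?d l)\<bar> \<le> ?P l * (if l = j then 0 else 2 * D)"
        using P_nonneg[of A Y i l] by (auto simp: abs_mult intro: mult_left_mono)
    qed
    finally show ?thesis .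
  qed
  also have "(\<Sum>l\<in>UNIV. ?P l * (if l = j then 0 else 2 * D)) = 2 * D * (1 - ?P j)"
  proof -
    have "(\<Sum>l\<in>UNIV. ?P l * (if l = j then 0 else 2 * D)) = (\<Sum>l\<in>UNIV. 2 * D * ?P l - (if l = j then 2 * D * ?P l else 0))"
      by (rule sum.cong) auto
    also have "\<dots> = 2 * D * (1 - ?P j)" by (simp add: sum_subtractf sum_distrib_left[symmetric] P_sum algebra_simps)
    finally show ?thesis .
  qed
  finally have "\<bar>?d j - (\<Sum>l\<in>UNIV. ?P l * ?d l)\<bar> \<le> 2 * D * (1 - ?P j)" .
  then have "\<bar>dP A Y H i j\<bar> \<le> ?P j * (2 * D * (1 - ?P j))"
    unfolding dP_def using P_nonneg[of A Y i j] by (auto simp: abs_mult intro: mult_left_mono)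
  then show ?thesis by (simp add: D_def algebra_simps)
qed

lemma norm_vec_le_sqrt_card:
  fixes x :: "'a::real_normed_vector^'n::finite"
  assumes "\<And>i. norm (x$i) \<le> b"
  shows "norm x \<le> sqrt (real CARD('n)) * b"
proof -
  have b0: "b \<ge> 0" using assms[of undefined] norm_ge_zero order_trans by blast
  have "norm x = sqrt (\<Sum>i\<in>UNIV. (norm (x$i))^2)" by (simp add: norm_vec_def L2_set_def)
  also have "\<dots> \<le> sqrt (\<Sum>i\<in>(UNIV::'n set). b^2)"
  proof (rule real_sqrt_le_mono, rule sum_mono)
    fix i show "(norm (x$i))^2 \<le> b^2" by (rule power_mono[OF assms]) auto
  qed
  also have "\<dots> = sqrt (real CARD('n)) * b" using b0 by (simp add: real_sqrt_mult)
  finally show ?thesis .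
qed

lemma norm_conv_le:
  fixes H :: "real^'d^'n::finite"
  shows "norm (\<Sum>j\<in>UNIV. attn_P A Y i j *\<^sub>R (H$j)) \<le> norm H"
proof -
  have "norm (\<Sum>j\<in>UNIV. attn_P A Y i j *\<^sub>R (H$j)) \<le> (\<Sum>j\<in>UNIV. norm (attn_P A Y i j *\<^sub>R (H$j)))"
    by (rule norm_sum)
  also have "\<dots> \<le> (\<Sum>j\<in>UNIV. attn_P A Y i j * norm H)"
    by (intro sum_mono) (simp add: P_nonneg mult_left_mono[OF nth_le])
  also have "\<dots> = norm H" by (simp add: sum_distrib_right[symmetric] P_sum)
  finally show ?thesis .
qed

lemma norm_dsum_le:
  fixes Y :: "real^'d^'n::finite"
  shows "norm (\<Sum>j\<in>UNIV. c j *\<^sub>R (Y$j)) \<le> (\<Sum>j\<in>UNIV. \<bar>c j\<bar>) * norm Y"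
proof -
  have "norm (\<Sum>j\<in>UNIV. c j *\<^sub>R (Y$j)) \<le> (\<Sum>j\<in>UNIV. norm (c j *\<^sub>R (Y$j)))"
    by (rule norm_sum)
  also have "\<dots> \<le> (\<Sum>j\<in>UNIV. \<bar>c j\<bar> * norm Y)"
    by (intro sum_mono) (simp add: mult_left_mono[OF nth_le])
  also have "\<dots> = (\<Sum>j\<in>UNIV. \<bar>c j\<bar>) * norm Y" by (simp add: sum_distrib_right)
  finally show ?thesis .
qed

lemma dSA_bound:
  fixes A :: "real^'d^'d" and V :: "real^'d^'k" and Y :: "real^'d^'n::finite"
  assumes "\<And>i j. attn_P A Y i j * (1 - attn_P A Y i j) \<le> e"
  shows "onorm (dSA A V Y) \<le> (1 + real CARD('n) * e * 4 * onorm ((*v) A) * (norm Y)^2) * onorm ((*v) V) * sqrt (real CARD('n))"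
proof (rule onorm_le)
  fix H :: "real^'d^'n"
  let ?a = "onorm ((*v) A)" and ?v = "onorm ((*v) V)" and ?N = "real CARD('n)"
  have a0: "?a \<ge> 0" and v0: "?v \<ge> 0" by (rule onorm_pos_le, simp)+
  have "norm (dSA A V Y H $ i) \<le> ?v * ((1 + ?N * e * 4 * ?a * (norm Y)^2) * norm H)" for i
  proof -
    have s1: "(\<Sum>j\<in>UNIV. \<bar>dP A Y H i j\<bar>) \<le> (\<Sum>j\<in>(UNIV::'n set). e * (4 * ?a * norm Y * norm H))"
    proof (rule sum_mono)
      fix j
      have "0 \<le> 4 * ?a * norm Y * norm H" using a0 by simp
      then show "\<bar>dP A Y H i j\<bar> \<le> e * (4 * ?a * norm Y * norm H)"
        using dP_bound[of A Y H i j] assms[of i j] mult_right_mono order_trans by blast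
    qed
    have "norm (\<Sum>j\<in>UNIV. dP A Y H i j *\<^sub>R (Y$j) + attn_P A Y i j *\<^sub>R (H$j))
       \<le> norm (\<Sum>j\<in>UNIV. dP A Y H i j *\<^sub>R (Y$j)) + norm (\<Sum>j\<in>UNIV. attn_P A Y i j *\<^sub>R (H$j))"
      by (simp add: sum.distrib norm_triangle_ineq)
    also have "\<dots> \<le> (\<Sum>j\<in>UNIV. \<bar>dP A Y H i j\<bar>) * norm Y + norm H"
      by (intro add_mono norm_dsum_le norm_conv_le)
    also have "\<dots> \<le> (?N * (e * (4 * ?a * norm Y * norm H))) * norm Y + norm H"
      using s1 by (intro add_mono mult_right_mono) auto
    also have "\<dots> = (1 + ?N * e * 4 * ?a * (norm Y)^2) * norm H" by (simp add: algebra_simps power2_eq_square)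
    finally have "norm (\<Sum>j\<in>UNIV. dP A Y H i j *\<^sub>R (Y$j) + attn_P A Y i j *\<^sub>R (H$j)) \<le> (1 + ?N * e * 4 * ?a * (norm Y)^2) * norm H" .
    then show ?thesis unfolding dSA_def
      using onorm[OF matrix_vector_mul_bounded_linear, of V] v0
      by simp (meson mult_left_mono order_trans)
  qed
  then have "norm (dSA A V Y H) \<le> sqrt ?N * (?v * ((1 + ?N * e * 4 * ?a * (norm Y)^2) * norm H))"
    by (rule norm_vec_le_sqrt_card)
  then show "norm (dSA A V Y H) \<le> (1 + ?N * e * 4 * ?a * (norm Y)^2) * ?v * sqrt ?N * norm H"
    by (simp add: algebra_simps)
qed




lemma asym: 
  fixes d :: real assumes "d > 0"
  shows "(\<lambda>R. R^2 * exp (- (d * R^2))) \<in> o(\<lambda>R. exp (-R))"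
  using assms by real_asymp

lemma asym2:
  fixes d K :: real assumes "d > 0" "K \<ge> 0"
  shows "\<forall>\<^sub>F R in at_top. K * (R^2 * exp (- (d * R^2))) \<le> 1 * exp (-1 * R)"
proof -
  have "\<forall>\<^sub>F R in at_top. norm (R^2 * exp (- (d * R^2))) \<le> (1/(K+1)) * norm (exp (-R))"
    using landau_o.smallD[OF asym[OF assms(1)], of "1/(K+1)"] assms by simp
  then show ?thesis
  proof (rule eventually_mono)
    fix R assume h: "norm (R^2 * exp (- (d * R^2))) \<le> (1/(K+1)) * norm (exp (-R))"
    have "K * (R^2 * exp (- (d * R^2))) \<le> (K+1) * (R^2 * exp (- (d * R^2)))"
      by (intro mult_right_mono) auto
    also have "\<dots> \<le> (K+1) * ((1/(K+1)) * exp (-R))"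
      using h assms by (intro mult_left_mono) auto
    also have "\<dots> = exp (-R)" using assms by simp
    finally show "K * (R^2 * exp (- (d * R^2))) \<le> 1 * exp (-1 * R)" by simp
  qed
qed




lemma score_scale:
  fixes A :: "real^'d^'d" and X :: "real^'d^'n::finite"
  shows "attn_score A (R *\<^sub>R X) i j = R^2 * attn_score A X i j"
  unfolding attn_score_def by (simp add: matrix_vector_mult_scaleR power2_eq_square)

lemma gap_exists:
  fixes s :: "'n::finite \<Rightarrow> 'n \<Rightarrow> real"
  assumes "\<And>i l. l \<noteq> J i \<Longrightarrow> s i l < s i (J i)"
  shows "\<exists>d>0. \<forall>i l. l \<noteq> J i \<longrightarrow> s i l \<le> s i (J i) - d"
proof -
  define G where "G = insert 1 ((\<lambda>(i,l). s i (J i) - s i l) ` {(i,l). l \<noteq> J i})"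
  have fin: "finite G" unfolding G_def by simp
  have pos: "\<forall>g\<in>G. g > 0" unfolding G_def using assms by auto
  have "Min G > 0" using fin pos by (simp add: G_def)
  moreover have "\<forall>i l. l \<noteq> J i \<longrightarrow> s i l \<le> s i (J i) - Min G"
  proof (intro allI impI)
    fix i l assume "l \<noteq> J i"
    then have "s i (J i) - s i l \<in> G" unfolding G_def by auto
    then have "Min G \<le> s i (J i) - s i l" using fin by simp
    then show "s i l \<le> s i (J i) - Min G" by simp
  qed
  ultimately show ?thesis by blast
qed

lemma P_small:
  fixes A :: "real^'d^'d" and Y :: "real^'d^'n::finite"
  assumes "l \<noteq> J" "attn_score A Y i l \<le> attn_score A Y i J - g"
  shows "attn_P A Y i l \<le> exp (-g)"
proof -
  let ?S = "\<Sum>l\<in>UNIV. exp (attn_score A Y i l)"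
  have "exp (attn_score A Y i J) \<le> ?S" by (rule member_le_sum) auto
  then have "attn_P A Y i l \<le> exp (attn_score A Y i l) / exp (attn_score A Y i J)"
    unfolding attn_P_def using sumexp_pos[of A Y i] by (intro divide_left_mono) auto
  also have "\<dots> = exp (attn_score A Y i l - attn_score A Y i J)" by (simp add: exp_diff)
  also have "\<dots> \<le> exp (-g)" using assms by simp
  finally show ?thesis .
qed

lemma P_var_small:
  fixes A :: "real^'d^'d" and Y :: "real^'d^'n::finite"
  assumes "\<And>l. l \<noteq> J \<Longrightarrow> attn_score A Y i l \<le> attn_score A Y i J - g"
  shows "attn_P A Y i j * (1 - attn_P A Y i j) \<le> real CARD('n) * exp (-g)"
proof -
  have 0: "0 \<le> attn_P A Y i j" "attn_P A Y i j \<le> 1" by (rule P_nonneg, rule P_le1)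
  have N1: "real CARD('n) \<ge> 1" by simp
  show ?thesis
  proof (cases "j = J")
    case False
    have "attn_P A Y i j * (1 - attn_P A Y i j) \<le> attn_P A Y i j * 1"
      using 0 by (intro mult_left_mono) auto
    also have "\<dots> \<le> exp (-g)" using P_small[OF False assms[OF False]] by simp
    also have "\<dots> \<le> real CARD('n) * exp (-g)" using N1 by simp
    finally show ?thesis .
  next
    case True
    have "1 - attn_P A Y i J = (\<Sum>l\<in>UNIV. attn_P A Y i l) - attn_P A Y i J" by (simp add: P_sum)
    also have "\<dots> = (\<Sum>l\<in>UNIV - {J}. attn_P A Y i l)" by (simp add: sum_diff1)
    also have "\<dots> \<le> (\<Sum>l\<in>UNIV - {J}. exp (-g))"
      by (rule sum_mono) (auto intro: P_small assms)
    also have "\<dots> \<le> real CARD('n) * exp (-g)"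
      by (simp add: card_Diff_singleton_if)
    finally have "1 - attn_P A Y i J \<le> real CARD('n) * exp (-g)" .
    moreover have "attn_P A Y i j * (1 - attn_P A Y i j) \<le> 1 * (1 - attn_P A Y i j)"
      using 0 by (intro mult_right_mono) auto
    ultimately show ?thesis using True by simp
  qed
qed

lemma part2:
  fixes A :: "real^'d^'d" and V :: "real^'d^'k" and X :: "real^'d^'n::finite"
  assumes X: "X \<in> E_set A"
  shows "\<exists>\<theta> :: real \<Rightarrow> real. (\<forall>R\<ge>0. \<theta> R \<ge> 0)
           \<and> (\<exists>C c. c > 0 \<and> (\<forall>\<^sub>F R in at_top. \<bar>\<theta> R - 1\<bar> \<le> C * exp (- c * R)))
           \<and> (\<forall>R\<ge>0. onorm (frechet_derivative (self_attention A V) (at (R *\<^sub>R X)))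
                  \<le> \<theta> R * onorm (\<lambda>x. V *v x) * sqrt (real CARD('n)))"
proof -
  let ?s = "attn_score A X"
  have "\<forall>i. \<exists>!j. \<forall>l. ?s i l \<le> ?s i j" using X by (simp add: E_set_def)
  then obtain J where J: "\<And>i l. ?s i l \<le> ?s i (J i)" and Ju: "\<And>i j. (\<forall>l. ?s i l \<le> ?s i j) \<Longrightarrow> j = J i"
    by metis
  have strict: "?s i l < ?s i (J i)" if "l \<noteq> J i" for i l
  proof (rule ccontr)
    assume "\<not> ?s i l < ?s i (J i)"
    then have "\<forall>m. ?s i m \<le> ?s i l" using J[of i] by (meson not_less order_trans)
    then have "l = J i" by (rule Ju)
    with that show False by simp
  qed
  obtain d where d: "d > 0" and dgap: "\<And>i l. l \<noteq> J i \<Longrightarrow> ?s i l \<le> ?s i (J i) - d"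
    using gap_exists[of J ?s, OF strict] by blast
  let ?N = "real CARD('n)" and ?a = "onorm ((*v) A)"
  have a0: "?a \<ge> 0" by (rule onorm_pos_le) simp
  define \<theta> where "\<theta> R = 1 + ?N * (?N * exp (- (d * R^2))) * 4 * ?a * (norm (R *\<^sub>R X))^2" for R
  have th1: "\<theta> R - 1 = (?N * ?N * 4 * ?a * (norm X)^2) * (R^2 * exp (- (d * R^2)))" for R
    by (simp add: \<theta>_def power_mult_distrib algebra_simps)
  have K0: "?N * ?N * 4 * ?a * (norm X)^2 \<ge> 0" using a0 by simp
  have thge: "\<theta> R \<ge> 1" for R using th1[of R] K0 by (metis diff_ge_0_iff_ge mult_nonneg_nonneg exp_ge_zero zero_le_power2)
  have "\<forall>R\<ge>0. \<theta> R \<ge> 0" using thge by (meson order_trans zero_le_one)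
  moreover have "\<exists>C c. c > 0 \<and> (\<forall>\<^sub>F R in at_top. \<bar>\<theta> R - 1\<bar> \<le> C * exp (- c * R))"
  proof (intro exI conjI)
    show "(1::real) > 0" by simp
    show "\<forall>\<^sub>F R in at_top. \<bar>\<theta> R - 1\<bar> \<le> 1 * exp (- 1 * R)"
      using asym2[OF d K0]
    proof (rule eventually_mono)
      fix R assume h: "?N * ?N * 4 * ?a * (norm X)^2 * (R^2 * exp (- (d * R^2))) \<le> 1 * exp (-1 * R)"
      have "\<bar>\<theta> R - 1\<bar> = \<theta> R - 1" using thge[of R] by simp
      then show "\<bar>\<theta> R - 1\<bar> \<le> 1 * exp (- 1 * R)" using h th1[of R] by simp
    qed
  qed
  moreover have "\<forall>R\<ge>0. onorm (frechet_derivative (self_attention A V) (at (R *\<^sub>R X)))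
                  \<le> \<theta> R * onorm (\<lambda>x. V *v x) * sqrt (real CARD('n))"
  proof (intro allI impI)
    fix R :: real assume "R \<ge> 0"
    have "attn_P A (R *\<^sub>R X) i j * (1 - attn_P A (R *\<^sub>R X) i j) \<le> ?N * exp (- (d * R^2))" for i j
    proof (rule P_var_small[where J = "J i"])
      fix l assume "l \<noteq> J i"
      have "R^2 * ?s i l \<le> R^2 * (?s i (J i) - d)" using dgap[OF \<open>l \<noteq> J i\<close>] by (intro mult_left_mono) auto
      then show "attn_score A (R *\<^sub>R X) i l \<le> attn_score A (R *\<^sub>R X) i (J i) - d * R^2"
        by (simp add: score_scale algebra_simps)
    qed
    from dSA_bound[of A "R *\<^sub>R X", OF this, of V]
    show "onorm (frechet_derivative (self_attention A V) (at (R *\<^sub>R X)))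
                  \<le> \<theta> R * onorm (\<lambda>x. V *v x) * sqrt (real CARD('n))"
      by (simp add: frechet_SA \<theta>_def)
  qed
  ultimately show ?thesis by blast
qed




lemma neg_W:
  fixes A :: "real^'d^'d"
  assumes "A \<noteq> 0"
  shows "negligible {X :: real^'d^'n::finite. A *v (X$i) = 0}"
proof -
  obtain k where k: "A$k \<noteq> 0" using assms by (metis vec_eq_iff zero_index)
  have "{X :: real^'d^'n. A *v (X$i) = 0} \<subseteq> {X. axis i (A$k) \<bullet> X = 0}"
  proof
    fix X :: "real^'d^'n" assume "X \<in> {X. A *v (X$i) = 0}"
    then have "(A *v (X$i))$k = 0" by simp
    then show "X \<in> {X. axis i (A$k) \<bullet> X = 0}"
      by (subst inner_axis') (simp add: matrix_vector_mult_def inner_vec_def)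
  qed
  moreover have "negligible {X :: real^'d^'n. axis i (A$k) \<bullet> X = 0}"
    by (rule negligible_hyperplane) (simp add: k)
  ultimately show ?thesis by (rule negligible_subset[rotated])
qed

definition qf :: "real^'d^'d \<Rightarrow> 'n \<Rightarrow> 'n \<Rightarrow> 'n \<Rightarrow> real^'d^'n \<Rightarrow> real" where
  "qf A i j l X = (A *v (X$i)) \<bullet> (X$j - X$l)"

definition dqf :: "real^'d^'d \<Rightarrow> 'n \<Rightarrow> 'n \<Rightarrow> 'n \<Rightarrow> real^'d^'n \<Rightarrow> real^'d^'n \<Rightarrow> real" where
  "dqf A i j l X H = (A *v (H$i)) \<bullet> (X$j - X$l) + (A *v (X$i)) \<bullet> (H$j - H$l)"

lemma has_derivative_qf:
  fixes A :: "real^'d^'d" and X :: "real^'d^'n::finite"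
  shows "(qf A i j l has_derivative dqf A i j l X) (at X)"
proof -
  have l1: "bounded_linear (\<lambda>Y::real^'d^'n. A *v (Y$i))"
    using bounded_linear_compose[OF matrix_vector_mul_bounded_linear bounded_linear_vec_nth] by blast
  have l2: "bounded_linear (\<lambda>Y::real^'d^'n. Y$j - Y$l)"
    by (intro bounded_linear_sub bounded_linear_vec_nth)
  show ?thesis unfolding qf_def[abs_def] dqf_def[abs_def]
    by (rule has_derivative_eq_rhs, rule has_derivative_inner[OF bounded_linear.has_derivative[OF l1 has_derivative_ident]
          bounded_linear.has_derivative[OF l2 has_derivative_ident]]) (auto simp: inner_commute add.commute)
qed

lemma bl_axis2: "bounded_linear (\<lambda>c::real. axis j (axis k c) :: real^'d::finite^'n::finite)"
  by (rule bounded_linear_compose[OF bounded_linear_axis bounded_linear_axis])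

lemma axis2_nth: "(axis j (axis k c) :: real^'d^'n) $ m $ p = (if m = j \<and> p = k then c else 0)"
  by (simp add: axis_def)

lemma neg_Zk:
  fixes A :: "real^'d^'d"
  assumes ij: "i \<noteq> j" and jl: "j \<noteq> l"
  shows "negligible {X :: real^'d^'n::finite. qf A i j l X = 0 \<and> (A *v (X$i))$k \<noteq> 0}"
proof -
  define S where "S = {X :: real^'d^'n. (A *v (X$i))$k \<noteq> 0}"
  define F where "F X = X + axis j (axis k (qf A i j l X - X$j$k))" for X :: "real^'d^'n"
  define F' where "F' X H = H + axis j (axis k (dqf A i j l X H - H$j$k))" for X H :: "real^'d^'n"
  define T where "T = {Y :: real^'d^'n. axis j (axis k 1) \<bullet> Y = 0}"
  have T: "negligible T" unfolding T_def by (rule negligible_hyperplane) simp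
  have Fd: "(F has_derivative F' X) (at X within S)" for X
  proof -
    have "((\<lambda>X. qf A i j l X - X$j$k) has_derivative (\<lambda>H. dqf A i j l X H - H$j$k)) (at X)"
      by (intro has_derivative_diff has_derivative_qf
          bounded_linear.has_derivative[OF bounded_linear_compose[OF bounded_linear_vec_nth bounded_linear_vec_nth] has_derivative_ident])
    then have "(F has_derivative F' X) (at X)" unfolding F_def[abs_def] F'_def[abs_def]
      by (intro has_derivative_add has_derivative_ident bounded_linear.has_derivative[OF bl_axis2])
    then show ?thesis by (rule has_derivative_at_withinI)
  qed
  have inj: "inj (F' X)" if "X \<in> S" for X
  proof (rule injI)
    fix H G assume eq: "F' X H = F' X G"
    have comp: "H$m$p = G$m$p" if "\<not> (m = j \<and> p = k)" for m p
      using arg_cong[OF eq, of "\<lambda>Z. Z$m$p"] that by (simp add: F'_def axis2_nth)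
    have Hi: "H$i = G$i" using comp ij by (simp add: vec_eq_iff)
    have Hl: "H$l = G$l" using comp jl by (simp add: vec_eq_iff)
    have "dqf A i j l X H = dqf A i j l X G"
      using arg_cong[OF eq, of "\<lambda>Z. Z$j$k"] by (simp add: F'_def axis2_nth)
    then have "(A *v (X$i)) \<bullet> (H$j - G$j) = 0"
      by (simp add: dqf_def Hi Hl inner_diff_right)
    moreover have "(A *v (X$i)) \<bullet> (H$j - G$j) = (A *v (X$i))$k * (H$j$k - G$j$k)"
    proof -
      have "(A *v (X$i)) \<bullet> (H$j - G$j) = (\<Sum>p\<in>UNIV. (A *v (X$i))$p * (H$j$p - G$j$p))"
        by (simp add: inner_vec_def)
      also have "\<dots> = (\<Sum>p\<in>UNIV. if p = k then (A *v (X$i))$k * (H$j$k - G$j$k) else 0)"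
        by (rule sum.cong) (auto simp: comp)
      finally show ?thesis by simp
    qed
    ultimately have "H$j$k = G$j$k" using that by (simp add: S_def)
    then show "H = G" unfolding vec_eq_iff using comp by metis
  qed
  have "negligible {X \<in> S. F X \<in> T}"
    by (rule negligible_differentiable_vimage[OF T inj Fd])
  moreover have "{X \<in> S. F X \<in> T} = {X. qf A i j l X = 0 \<and> (A *v (X$i))$k \<noteq> 0}"
    by (auto simp: S_def T_def F_def inner_axis' axis2_nth)
  ultimately show ?thesis by simp
qed




lemma neg_Z:
  fixes A :: "real^'d^'d"
  assumes A: "A \<noteq> 0" and ij: "i \<noteq> j" and jl: "j \<noteq> l"
  shows "negligible {X :: real^'d^'n::finite. qf A i j l X = 0}"
proof -
  have "{X :: real^'d^'n. qf A i j l X = 0} \<subseteq> {X. A *v (X$i) = 0} \<union> \<Union>((\<lambda>k. {X. qf A i j l X = 0 \<and> (A *v (X$i))$k \<noteq> 0}) ` UNIV)"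
    by (auto simp: vec_eq_iff)
  moreover have "negligible ({X :: real^'d^'n. A *v (X$i) = 0} \<union> \<Union>((\<lambda>k. {X. qf A i j l X = 0 \<and> (A *v (X$i))$k \<noteq> 0}) ` UNIV))"
    using neg_W[OF A, where 'n='n, of i] neg_Zk[OF ij jl, of A] by auto
  ultimately show ?thesis by (rule negligible_subset[rotated])
qed

lemma neg_Z':
  fixes A :: "real^'d^'d"
  assumes A: "A \<noteq> 0" and jl: "j \<noteq> l"
  shows "negligible {X :: real^'d^'n::finite. qf A i j l X = 0}"
proof (cases "i = j")
  case False then show ?thesis using neg_Z[OF A False jl] by simp
next
  case True
  then have il: "i \<noteq> l" using jl by simp
  have "{X :: real^'d^'n. qf A i j l X = 0} = {X. qf A i l j X = 0}"
    by (auto simp: qf_def inner_diff_right)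
  then show ?thesis using neg_Z[OF A il jl[symmetric]] by simp
qed

lemma part1:
  fixes A :: "real^'d^'d"
  assumes A: "A \<noteq> 0"
  shows "(unit_ball_seq - E_set A :: (real^'d^'n::finite) set) \<in> null_sets lebesgue"
proof -
  have sub: "(unit_ball_seq - E_set A :: (real^'d^'n) set) \<subseteq> \<Union>((\<lambda>(i,j,l). {X. qf A i j l X = 0}) ` {(i,j,l). j \<noteq> l})"
  proof
    fix X :: "real^'d^'n" assume X: "X \<in> unit_ball_seq - E_set A"
    then obtain i where ni: "\<not> (\<exists>!j. \<forall>l. attn_score A X i l \<le> attn_score A X i j)"
      unfolding E_set_def by blast
    let ?s = "attn_score A X i"
    have "Max (range ?s) \<in> range ?s" by (rule Max_in) auto
    then obtain j where j: "?s j = Max (range ?s)" by (metis imageE)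
    have jmax: "\<forall>l. ?s l \<le> ?s j" unfolding j by simp
    with ni obtain j' where j': "\<forall>l. ?s l \<le> ?s j'" "j' \<noteq> j" by blast
    have "?s j = ?s j'" using jmax j' by (meson antisym)
    then have "qf A i j j' X = 0"
      by (simp add: qf_def attn_score_def inner_diff_right)
    then show "X \<in> \<Union>((\<lambda>(i,j,l). {X. qf A i j l X = 0}) ` {(i,j,l). j \<noteq> l})"
      using j'(2) by blast
  qed
  have "negligible (\<Union>((\<lambda>(i,j,l). {X :: real^'d^'n. qf A i j l X = 0}) ` {(i,j,l). j \<noteq> l}))"
    by (rule negligible_Union) (auto intro: neg_Z'[OF A])
  then have "negligible (unit_ball_seq - E_set A :: (real^'d^'n) set)"
    using sub by (rule negligible_subset)
  then show ?thesis by (simp add: negligible_iff_null_sets)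
qed

theorem mainTheorem8:
  fixes A :: "real^'d^'d" and V :: "real^'d^'k"
  assumes "A \<noteq> 0" and "V \<noteq> 0"
  shows "(unit_ball_seq - E_set A :: (real^'d^'n::finite) set) \<in> null_sets lebesgue
    \<and> (\<forall>X \<in> (E_set A :: (real^'d^'n) set).
         \<exists>\<theta> :: real \<Rightarrow> real. (\<forall>R\<ge>0. \<theta> R \<ge> 0)
           \<and> (\<exists>C c. c > 0 \<and> (\<forall>\<^sub>F R in at_top. \<bar>\<theta> R - 1\<bar> \<le> C * exp (- c * R)))
           \<and> (\<forall>R\<ge>0. onorm (frechet_derivative (self_attention A V) (at (R *\<^sub>R X)))
                  \<le> \<theta> R * onorm (\<lambda>x. V *v x) * sqrt (real CARD('n))))"
  using part1[OF assms(1)] part2 by blast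


end
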